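(* Let $\mathcal{X}$ be a set, $\mathcal{Y}$ a finite set of labels, $n\ge1$, $\mathcal{F}$ a nonempty class of functions $\mathcal{X}\to\mathcal{Y}$, and let $T$ be the training procedure $T(\mathbf{x},\mathbf{y})=\arg\min_{f\in\mathcal{F}}\sum_{i=1}^n\mathbbm{1}_{f(x_i)\ne y_i}$ (any minimizer). Let $\mathcal{D}_{\mathrm{train}}$ be any distribution over $(\mathcal{X}\times\mathcal{Y})^n$ and $\eta>0$. Define $\mathsf{Train}=\Pr[f(x_i)=y_i]$ where $(\mathbf{x},\mathbf{y})\sim\mathcal{D}_{\mathrm{train}}$, $f=T(\mathbf{x},\mathbf{y})$ and $i$ is uniform on $\{1,\ldots,n\}$; and $\mathsf{Train}(\eta)=\Pr[\tilde f(x_i)=y_i]$ where $(\mathbf{x},\mathbf{y})\sim\mathcal{D}_{\mathrm{train}}$, each $\tilde y_i$ independently equals $y_i$ with probability $1-\eta$ and is uniform on $\mathcal{Y}$ otherwise, $\tilde f=T(\mathbf{x},\tilde{\mathbf{y}})$, and $i$ is uniform on $\{1,\ldots,n\}$. Then the robustness gap satisfies $$\big(\mathsf{Train}-\mathsf{Train}(\eta)\big)_+\le 2\eta.$$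
   Context: $x_+=\max(x,0)$. Accuracies are measured with respect to the original (uncorrupted) labels $y_i$. *)

theory Defs
  imports "HOL-Probability.Probability"
begin

text \<open>A training set of size n is a list S of length n of pairs (x_i, y_i).
  Indices are 0-based: i ranges over {0..<n}.\<close>

definition train_err :: "('x \<Rightarrow> 'y) \<Rightarrow> ('x \<times> 'y) list \<Rightarrow> nat" where
  "train_err f S = card {i. i < length S \<and> f (fst (S ! i)) \<noteq> snd (S ! i)}"

definition is_erm :: "('x \<Rightarrow> 'y) set \<Rightarrow> nat \<Rightarrow> (('x \<times> 'y) list \<Rightarrow> ('x \<Rightarrow> 'y)) \<Rightarrow> bool" where
  "is_erm F n T \<longleftrightarrow> (\<forall>S. length S = n \<longrightarrow>
      T S \<in> F \<and> (\<forall>f\<in>F. train_err (T S) S \<le> train_err f S))"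

definition emp_acc :: "nat \<Rightarrow> ('x \<Rightarrow> 'y) \<Rightarrow> ('x \<times> 'y) list \<Rightarrow> real" where
  "emp_acc n f S = (1 / real n) * (\<Sum>i<n. if f (fst (S ! i)) = snd (S ! i) then 1 else 0)"

text \<open>Probability of the noisy label vector ys' given clean labels ys: independently per
  coordinate, keep the label with prob. 1-eta, else resample uniformly on the label type.\<close>
definition noise_prob :: "nat \<Rightarrow> real \<Rightarrow> ('y::finite) list \<Rightarrow> 'y list \<Rightarrow> real" where
  "noise_prob n \<eta> ys ys' =
     (\<Prod>i<n. (if ys' ! i = ys ! i then 1 - \<eta> else 0) + \<eta> / real (CARD('y)))"

text \<open>Conditional (given the clean sample S) accuracy for Train and Train(eta).\<close>
definition clean_acc :: "nat \<Rightarrow> (('x \<times> 'y) list \<Rightarrow> ('x \<Rightarrow> 'y)) \<Rightarrow> ('x \<times> 'y) list \<Rightarrow> real" where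
  "clean_acc n T S = emp_acc n (T S) S"

definition noisy_acc :: "nat \<Rightarrow> real \<Rightarrow> (('x \<times> ('y::finite)) list \<Rightarrow> ('x \<Rightarrow> 'y)) \<Rightarrow> ('x \<times> 'y) list \<Rightarrow> real" where
  "noisy_acc n \<eta> T S =
     (\<Sum>ys' \<in> {ys'. length ys' = n}. noise_prob n \<eta> (map snd S) ys' *
         emp_acc n (T (zip (map fst S) ys')) S)"

definition Train :: "('x \<times> 'y) list measure \<Rightarrow> nat \<Rightarrow> (('x \<times> 'y) list \<Rightarrow> ('x \<Rightarrow> 'y)) \<Rightarrow> real" where
  "Train D n T = (\<integral>S. clean_acc n T S \<partial>D)"

definition Train_noisy :: "('x \<times> ('y::finite)) list measure \<Rightarrow> nat \<Rightarrow> real \<Rightarrow> (('x \<times> 'y) list \<Rightarrow> ('x \<Rightarrow> 'y)) \<Rightarrow> real" where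
  "Train_noisy D n \<eta> T = (\<integral>S. noisy_acc n \<eta> T S \<partial>D)"

end

theory Submission
  imports Defs
begin

definition qn :: "real \<Rightarrow> 'y::finite \<Rightarrow> 'y \<Rightarrow> real" where
  "qn \<eta> b a = (if a = b then 1 - \<eta> else 0) + \<eta> / real (CARD('y))"

definition hd_dist :: "nat \<Rightarrow> 'y list \<Rightarrow> 'y list \<Rightarrow> real" where
  "hd_dist n m l = (\<Sum>i<n. if l ! i = m ! i then 0 else 1)"

lemma qn_nonneg: "0 \<le> \<eta> \<Longrightarrow> \<eta> \<le> 1 \<Longrightarrow> 0 \<le> qn \<eta> b a"
  by (simp add: qn_def)

lemma qn_sum: "(\<Sum>a\<in>UNIV. qn \<eta> (b::'y::finite) a) = 1"
proof -
  have "(\<Sum>a\<in>UNIV. qn \<eta> b a) = (\<Sum>a\<in>UNIV. (if a = b then 1 - \<eta> else 0)) + real CARD('y) * (\<eta> / real CARD('y))"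
    by (simp add: qn_def sum.distrib)
  also have "\<dots> = 1" by simp
  finally show ?thesis .
qed

lemma qn_sum_ne: assumes "0 \<le> \<eta>" shows "(\<Sum>a\<in>UNIV. qn \<eta> (b::'y::finite) a * (if a = b then 0 else 1)) \<le> \<eta>"
proof -
  have "(\<Sum>a\<in>UNIV. qn \<eta> b a * (if a = b then 0 else 1)) = (\<Sum>a\<in>UNIV. qn \<eta> b a - (if a = b then qn \<eta> b a else 0))"
    by (rule sum.cong) auto
  also have "\<dots> = 1 - qn \<eta> b b" by (simp add: sum_subtractf qn_sum)
  also have "\<dots> \<le> \<eta>" using assms by (simp add: qn_def)
  finally show ?thesis .
qed

lemma lists_Suc_sum:
  "(\<Sum>ys\<in>{ys::('y::finite) list. length ys = Suc n}. g ys) = (\<Sum>a\<in>UNIV. \<Sum>l\<in>{l. length l = n}. g (a # l))"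
proof -
  have fin: "finite {l::'y list. length l = n}"
    using finite_lists_length_eq[of "UNIV::'y set" n] by simp
  have eq: "{ys::'y list. length ys = Suc n} = (\<lambda>(a,l). a # l) ` (UNIV \<times> {l. length l = n})"
    by (auto simp: length_Suc_conv image_def)
  have inj: "inj_on (\<lambda>(a,l). a # (l::'y list)) (UNIV \<times> {l. length l = n})"
    by (auto simp: inj_on_def)
  show ?thesis
    unfolding eq sum.reindex[OF inj] sum.cartesian_product by (simp add: split_def)
qed

lemma noise_prob_Cons:
  "noise_prob (Suc n) \<eta> (b # m) (a # l) = qn \<eta> b a * noise_prob n \<eta> m l"
  unfolding noise_prob_def qn_def prod.lessThan_Suc_shift by simp

lemma hd_dist_Cons:
  "hd_dist (Suc n) (b # m) (a # l) = (if a = b then 0 else 1) + hd_dist n m l"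
  unfolding hd_dist_def sum.lessThan_Suc_shift by simp

lemma noise_prob_nonneg: "0 \<le> \<eta> \<Longrightarrow> \<eta> \<le> 1 \<Longrightarrow> 0 \<le> noise_prob n \<eta> m l"
  unfolding noise_prob_def by (intro prod_nonneg) auto

lemma noise_sum: "length m = n \<Longrightarrow>
  (\<Sum>l\<in>{l::('y::finite) list. length l = n}. noise_prob n \<eta> m l) = 1"
proof (induction n arbitrary: m)
  case 0
  then show ?case by (simp add: noise_prob_def)
next
  case (Suc n)
  then obtain b m' where m: "m = b # m'" "length m' = n" by (cases m) auto
  have "(\<Sum>l\<in>{l::'y list. length l = Suc n}. noise_prob (Suc n) \<eta> m l)
      = (\<Sum>a\<in>UNIV. qn \<eta> b a * (\<Sum>l\<in>{l::'y list. length l = n}. noise_prob n \<eta> m' l))"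
    by (simp add: lists_Suc_sum m noise_prob_Cons sum_distrib_left)
  also have "\<dots> = 1" using Suc.IH[OF m(2)] by (simp add: qn_sum)
  finally show ?case .
qed

lemma noise_dist: "length m = n \<Longrightarrow> 0 \<le> \<eta> \<Longrightarrow> \<eta> \<le> 1 \<Longrightarrow>
  (\<Sum>l\<in>{l::('y::finite) list. length l = n}. noise_prob n \<eta> m l * hd_dist n m l) \<le> real n * \<eta>"
proof (induction n arbitrary: m)
  case 0
  then show ?case by (simp add: hd_dist_def)
next
  case (Suc n)
  then obtain b m' where m: "m = b # m'" "length m' = n" by (cases m) auto
  have "(\<Sum>l\<in>{l::'y list. length l = Suc n}. noise_prob (Suc n) \<eta> m l * hd_dist (Suc n) m l)
      = (\<Sum>a\<in>UNIV. \<Sum>l\<in>{l::'y list. length l = n}. qn \<eta> b a * (if a = b then 0 else 1) * noise_prob n \<eta> m' l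
            + qn \<eta> b a * (noise_prob n \<eta> m' l * hd_dist n m' l))"
    by (simp add: lists_Suc_sum m noise_prob_Cons hd_dist_Cons algebra_simps)
  also have "\<dots> = (\<Sum>a\<in>UNIV. qn \<eta> b a * (if a = b then 0 else 1) * (\<Sum>l\<in>{l::'y list. length l = n}. noise_prob n \<eta> m' l))
            + (\<Sum>a\<in>UNIV. qn \<eta> b a * (\<Sum>l\<in>{l::'y list. length l = n}. noise_prob n \<eta> m' l * hd_dist n m' l))"
    by (simp add: sum.distrib sum_distrib_left)
  also have "\<dots> = (\<Sum>a\<in>UNIV. qn \<eta> b a * (if a = b then 0 else 1))
            + (\<Sum>a\<in>UNIV. qn \<eta> b a * (\<Sum>l\<in>{l::'y list. length l = n}. noise_prob n \<eta> m' l * hd_dist n m' l))"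
    using noise_sum[OF m(2)] by simp
  also have "\<dots> \<le> \<eta> + (\<Sum>a\<in>UNIV. qn \<eta> b a * (real n * \<eta>))"
    apply (intro add_mono qn_sum_ne sum_mono mult_left_mono Suc.IH)
    using m Suc.prems by (auto intro: qn_nonneg)
  also have "\<dots> = real (Suc n) * \<eta>"
    using sum_distrib_right[of "qn \<eta> b" UNIV "real n * \<eta>", symmetric] by (simp add: qn_sum algebra_simps)
  finally show ?case .
qed


definition agr :: "nat \<Rightarrow> ('x \<Rightarrow> 'y) \<Rightarrow> 'x list \<Rightarrow> 'y list \<Rightarrow> real" where
  "agr n f xs ys = (\<Sum>i<n. if f (xs ! i) = ys ! i then 1 else 0)"

lemma emp_acc_agr: "length S = n \<Longrightarrow> emp_acc n f S = agr n f (map fst S) (map snd S) / real n"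
  unfolding emp_acc_def agr_def by (simp add: sum_divide_distrib)

lemma train_err_agr:
  assumes "length xs = n" "length ys = n"
  shows "real (train_err f (zip xs ys)) = real n - agr n f xs ys"
proof -
  have "train_err f (zip xs ys) = card {i\<in>{..<n}. f (xs ! i) \<noteq> ys ! i}"
    unfolding train_err_def using assms by (intro arg_cong[where f=card]) auto
  also have "\<dots> = (\<Sum>i\<in>{i\<in>{..<n}. f (xs ! i) \<noteq> ys ! i}. 1::nat)"
    by simp
  also have "\<dots> = (\<Sum>i<n. if f (xs ! i) \<noteq> ys ! i then 1 else 0)"
    by (rule sum.inter_filter) simp
  finally have "real (train_err f (zip xs ys)) = (\<Sum>i<n. if f (xs ! i) \<noteq> ys ! i then 1 else 0)"
    by (simp add: if_distrib cong: if_cong)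
  also have "\<dots> = (\<Sum>i<n. 1 - (if f (xs ! i) = ys ! i then 1 else 0))"
    by (rule sum.cong) auto
  also have "\<dots> = real n - agr n f xs ys"
    by (simp add: sum_subtractf agr_def)
  finally show ?thesis .
qed

lemma agr_dist1: "agr n f xs ys \<ge> agr n f xs ys' - hd_dist n ys ys'"
  unfolding agr_def hd_dist_def sum_subtractf[symmetric]
  by (rule sum_mono) auto

lemma agr_dist2: "agr n f xs ys' \<ge> agr n f xs ys - hd_dist n ys ys'"
  unfolding agr_def hd_dist_def sum_subtractf[symmetric]
  by (rule sum_mono) auto

lemma hd_dist_sym: "hd_dist n a b = hd_dist n b a"
  unfolding hd_dist_def by (intro sum.cong) auto

lemma per_sample:
  fixes T :: "('x \<times> 'y::finite) list \<Rightarrow> ('x \<Rightarrow> 'y)"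
  assumes erm: "is_erm F n T" and n: "n \<ge> 1" and len: "length S = n"
    and e0: "0 \<le> \<eta>" and e1: "\<eta> \<le> 1"
  shows "clean_acc n T S \<le> noisy_acc n \<eta> T S + 2 * \<eta>"
proof -
  define xs where "xs = map fst S"
  define ys where "ys = map snd S"
  have lx: "length xs = n" and ly: "length ys = n" using len by (auto simp: xs_def ys_def)
  define f0 where "f0 = T S"
  have f0F: "f0 \<in> F" using erm len by (simp add: is_erm_def f0_def)
  let ?L = "{l::'y list. length l = n}"
  have key: "emp_acc n (T (zip xs ys')) S \<ge> clean_acc n T S - 2 * hd_dist n ys ys' / real n"
    if ys': "length ys' = n" for ys'
  proof -
    define g where "g = T (zip xs ys')"
    have "train_err g (zip xs ys') \<le> train_err f0 (zip xs ys')"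
      using erm f0F lx ys' unfolding is_erm_def g_def by simp
    hence "real (train_err g (zip xs ys')) \<le> real (train_err f0 (zip xs ys'))" by simp
    hence a: "agr n g xs ys' \<ge> agr n f0 xs ys'"
      using train_err_agr[OF lx ys'] by simp
    have "agr n g xs ys \<ge> agr n f0 xs ys - 2 * hd_dist n ys ys'"
      using a agr_dist1[where n=n and f=g and xs=xs and ys=ys and ys'=ys'] agr_dist2[where n=n and f=f0 and xs=xs and ys=ys and ys'=ys'] hd_dist_sym[of n ys ys'] by linarith
    hence "agr n g xs ys / real n \<ge> (agr n f0 xs ys - 2 * hd_dist n ys ys') / real n"
      using n by (simp add: divide_right_mono)
    thus ?thesis
      unfolding clean_acc_def f0_def[symmetric] g_def[symmetric]
      using emp_acc_agr[OF len] by (simp add: xs_def ys_def diff_divide_distrib)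
  qed
  have fin: "finite ?L" using finite_lists_length_eq[of "UNIV::'y set" n] by simp
  have "noisy_acc n \<eta> T S = (\<Sum>ys'\<in>?L. noise_prob n \<eta> ys ys' * emp_acc n (T (zip xs ys')) S)"
    unfolding noisy_acc_def xs_def ys_def by simp
  also have "\<dots> \<ge> (\<Sum>ys'\<in>?L. noise_prob n \<eta> ys ys' * (clean_acc n T S - 2 * hd_dist n ys ys' / real n))"
    by (intro sum_mono mult_left_mono key noise_prob_nonneg e0 e1) auto
  moreover have "(\<Sum>ys'\<in>?L. noise_prob n \<eta> ys ys' * (clean_acc n T S - 2 * hd_dist n ys ys' / real n))
      = clean_acc n T S * (\<Sum>ys'\<in>?L. noise_prob n \<eta> ys ys')
        - (2 / real n) * (\<Sum>ys'\<in>?L. noise_prob n \<eta> ys ys' * hd_dist n ys ys')"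
    by (simp add: sum_subtractf sum_distrib_left sum_distrib_right algebra_simps)
  moreover have "clean_acc n T S * (\<Sum>ys'\<in>?L. noise_prob n \<eta> ys ys') = clean_acc n T S"
    using noise_sum[OF ly] by simp
  moreover have "(2 / real n) * (\<Sum>ys'\<in>?L. noise_prob n \<eta> ys ys' * hd_dist n ys ys') \<le> (2 / real n) * (real n * \<eta>)"
    using noise_dist[OF ly e0 e1] by (intro mult_left_mono) auto
  moreover have "(2 / real n) * (real n * \<eta>) = 2 * \<eta>" using n by simp
  ultimately show ?thesis by linarith
qed


lemma emp_acc_bounds:
  assumes "n \<ge> 1"
  shows "0 \<le> emp_acc n f S" "emp_acc n f S \<le> 1"
proof -
  have s0: "0 \<le> (\<Sum>i<n. if f (fst (S ! i)) = snd (S ! i) then 1 else 0::real)"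
    by (intro sum_nonneg) auto
  have s1: "(\<Sum>i<n. if f (fst (S ! i)) = snd (S ! i) then 1 else 0::real) \<le> (\<Sum>i<n. 1)"
    by (intro sum_mono) auto
  show "0 \<le> emp_acc n f S" unfolding emp_acc_def using s0 by simp
  show "emp_acc n f S \<le> 1" unfolding emp_acc_def using s1 assms by (simp add: divide_le_eq_1)
qed

lemma noisy_bounds:
  fixes T :: "('x \<times> 'y::finite) list \<Rightarrow> ('x \<Rightarrow> 'y)"
  assumes "n \<ge> 1" "length S = n" "0 \<le> \<eta>" "\<eta> \<le> 1"
  shows "\<bar>noisy_acc n \<eta> T S\<bar> \<le> 1"
proof -
  let ?L = "{l::'y list. length l = n}"
  let ?p = "noise_prob n \<eta> (map snd S)"
  have ly: "length (map snd S) = n" using assms by simp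
  have "0 \<le> noisy_acc n \<eta> T S" unfolding noisy_acc_def
    using assms by (intro sum_nonneg mult_nonneg_nonneg noise_prob_nonneg emp_acc_bounds) auto
  moreover have "noisy_acc n \<eta> T S \<le> (\<Sum>ys'\<in>?L. ?p ys' * 1)" unfolding noisy_acc_def
    using assms by (intro sum_mono mult_left_mono noise_prob_nonneg emp_acc_bounds) auto
  moreover have "(\<Sum>ys'\<in>?L. ?p ys' * 1) = 1" using noise_sum[OF ly] by simp
  ultimately show ?thesis by linarith
qed

theorem lemmaD2:
  fixes F :: "('x \<Rightarrow> 'y::finite) set"
    and T :: "('x \<times> 'y) list \<Rightarrow> ('x \<Rightarrow> 'y)"
    and D :: "('x \<times> 'y) list measure"
    and n :: nat and \<eta> :: real
  assumes "n \<ge> 1"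
    and "F \<noteq> {}"
    and "is_erm F n T"
    and "prob_space D"
    and "\<forall>S\<in>space D. length S = n"
    and "clean_acc n T \<in> borel_measurable D"
    and "noisy_acc n \<eta> T \<in> borel_measurable D"
    and "\<eta> > 0" and "\<eta> \<le> 1"
  shows "max (Train D n T - Train_noisy D n \<eta> T) 0 \<le> 2 * \<eta>"
proof -
  interpret prob_space D by fact
  have ic: "integrable D (clean_acc n T)"
  proof (rule integrable_const_bound[where B=1])
    show "AE x in D. norm (clean_acc n T x) \<le> 1"
    proof (intro AE_I2)
      fix x
      show "norm (clean_acc n T x) \<le> 1"
        using emp_acc_bounds[OF assms(1), of "T x" x] by (simp add: clean_acc_def)
    qed
  qed fact
  have inz: "integrable D (noisy_acc n \<eta> T)"
  proof (rule integrable_const_bound[where B=1])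
    show "AE x in D. norm (noisy_acc n \<eta> T x) \<le> 1"
      using noisy_bounds[OF assms(1) _ _ assms(9), of _ T] assms(5,8) by (intro AE_I2) simp
  qed fact
  have "Train D n T \<le> (\<integral>S. noisy_acc n \<eta> T S + 2 * \<eta> \<partial>D)"
    unfolding Train_def
    using per_sample[OF assms(3,1) _ _ assms(9)] assms(5,8)
    by (intro integral_mono ic Bochner_Integration.integrable_add inz integrable_const) auto
  also have "\<dots> = Train_noisy D n \<eta> T + 2 * \<eta>"
    unfolding Train_noisy_def using inz by (simp add: prob_space)
  finally show ?thesis using assms(8) by simp
qed

end
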